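(* Let $\mathcal{L}_1,\mathcal{L}_2$ be objects of $\mathbf{Cal^0_{Sym}}$ that are DAC-lattices, and let $f\in\mathbf{Cal^0_{Sym}}(\mathcal{L}_1,\mathcal{L}_2^{\mathrm{op}})$ be such that $f(\mathcal{L}_1)$ has length $2$. Then the coatom $X:=\bigcup\{\{p\}\times\Sigma[f(p)]\,;\,p\in\Sigma_1\}$ of $\mathcal{L}_1\circledast\mathcal{L}_2$ (where $f(p)$ is regarded as an element of $\mathcal{L}_2$) is a $\ast$-coatom, i.e. there exist distinct coatoms $x_1,y_1$ of $\mathcal{L}_1$, distinct coatoms $x_2,y_2$ of $\mathcal{L}_2$ and a bijection $h:\Sigma'[x_1\wedge y_1]\to\Sigma'[x_2\wedge y_2]$ such that $X=\bigcup\{\Sigma[z]\times\Sigma[h(z)];z\in\Sigma'[x_1\wedge y_1]\}$.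
   Context: Lattice notation: $\Sigma_i,\Sigma_i'$ atoms and coatoms; $\Sigma[a]$ atoms below $a$, $\Sigma'[a]$ coatoms above $a$; $\mathsf{Cl}(\omega)=\{\Sigma[a];a\in\omega\}$; $\mathcal{L}^{\mathrm{op}}$ the dual lattice; $f^\circ(b):=\bigvee\{a;f(a)\le b\}$. A DAC-lattice is a lattice with $0,1$ such that $\mathcal{L}$ and $\mathcal{L}^{\mathrm{op}}$ are atomistic with the covering property. $\mathbf{Cal^0_{Sym}}$: objects are complete atomistic coatomistic lattices with $\Sigma[x]\cup\Sigma[y]\ne\Sigma$ for all coatoms $x,y$ and $\Sigma'[p]\cup\Sigma'[q]\ne\Sigma'$ for all atoms $p,q$; arrows preserve arbitrary joins, send atoms to atoms or $0$, with $f^\circ$ sending coatoms to coatoms or $1$. $\Sigma'_\circledast$ is the set of $R\subsetneqq\Sigma_1\times\Sigma_2$ such that for all $(p_1,p_2)$, $\{q_1;(q_1,p_2)\in R\}\in\mathsf{Cl}(\Sigma_1'\cup\{1\})$ and $\{q_2;(p_1,q_2)\in R\}\in\mathsf{Cl}(\Sigma_2'\cup\{1\})$; $\mathcal{L}_1\circledast\mathcal{L}_2:=\{\bigcap\omega;\omega\subseteq\Sigma'_\circledast\cup\{\Sigma_1\times\Sigma_2\}\}$. The length of a subset is the supremum of lengths of its chains (a chain $c_0<\dots<c_n$ has length $n$). *)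

theory Defs
  imports Main "HOL-Library.Dual_Ordered_Lattice" "HOL-Library.Extended_Nat"
begin

definition atom :: "'a::complete_lattice \<Rightarrow> bool" where
  "atom p \<longleftrightarrow> bot < p \<and> (\<forall>x. bot < x \<and> x \<le> p \<longrightarrow> x = p)"

definition coatom :: "'a::complete_lattice \<Rightarrow> bool" where
  "coatom x \<longleftrightarrow> x < top \<and> (\<forall>y. x \<le> y \<and> y < top \<longrightarrow> y = x)"

definition Atoms :: "'a::complete_lattice set" where
  "Atoms = {p. atom p}"

definition Coatoms :: "'a::complete_lattice set" where
  "Coatoms = {x. coatom x}"

definition atoms_below :: "'a::complete_lattice \<Rightarrow> 'a set" where
  "atoms_below a = {p. atom p \<and> p \<le> a}"

definition coatoms_above :: "'a::complete_lattice \<Rightarrow> 'a set" where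
  "coatoms_above a = {x. coatom x \<and> a \<le> x}"

definition Cl :: "'a::complete_lattice set \<Rightarrow> 'a set set" where
  "Cl \<omega> = atoms_below ` \<omega>"

definition covers :: "'a::order \<Rightarrow> 'a \<Rightarrow> bool" where
  "covers a b \<longleftrightarrow> a < b \<and> (\<forall>c. a \<le> c \<and> c \<le> b \<longrightarrow> c = a \<or> c = b)"

definition atomistic :: "'a::complete_lattice itself \<Rightarrow> bool" where
  "atomistic _ \<longleftrightarrow> (\<forall>a::'a. a = Sup (atoms_below a))"

definition coatomistic :: "'a::complete_lattice itself \<Rightarrow> bool" where
  "coatomistic _ \<longleftrightarrow> (\<forall>a::'a. a = Inf (coatoms_above a))"

definition covering_property :: "'a::complete_lattice itself \<Rightarrow> bool" where
  "covering_property _ \<longleftrightarrow>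
     (\<forall>(a::'a) p. atom p \<and> \<not> p \<le> a \<longrightarrow> covers a (sup a p))"

definition DAC_lattice :: "'a::complete_lattice itself \<Rightarrow> bool" where
  "DAC_lattice T \<longleftrightarrow> atomistic T \<and> covering_property T \<and>
     atomistic TYPE('a dual) \<and> covering_property TYPE('a dual)"

definition Cal0Sym_obj :: "'a::complete_lattice itself \<Rightarrow> bool" where
  "Cal0Sym_obj T \<longleftrightarrow> atomistic T \<and> coatomistic T \<and>
     (\<forall>x y::'a. coatom x \<and> coatom y \<longrightarrow> atoms_below x \<union> atoms_below y \<noteq> Atoms) \<and>
     (\<forall>p q::'a. atom p \<and> atom q \<longrightarrow> coatoms_above p \<union> coatoms_above q \<noteq> Coatoms)"

definition resid :: "('a::complete_lattice \<Rightarrow> 'b::complete_lattice) \<Rightarrow> 'b \<Rightarrow> 'a" where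
  "resid f b = Sup {a. f a \<le> b}"

definition Cal0Sym_arrow :: "('a::complete_lattice \<Rightarrow> 'b::complete_lattice) \<Rightarrow> bool" where
  "Cal0Sym_arrow f \<longleftrightarrow>
     (\<forall>S. f (Sup S) = Sup (f ` S)) \<and>
     (\<forall>p. atom p \<longrightarrow> atom (f p) \<or> f p = bot) \<and>
     (\<forall>x. coatom x \<longrightarrow> coatom (resid f x) \<or> resid f x = top)"

definition chain_of_length :: "'a::order set \<Rightarrow> nat \<Rightarrow> bool" where
  "chain_of_length S n \<longleftrightarrow>
     (\<exists>c::nat \<Rightarrow> 'a. (\<forall>i\<le>n. c i \<in> S) \<and> (\<forall>i<n. c i < c (Suc i)))"

definition set_length :: "'a::order set \<Rightarrow> enat" where
  "set_length S = Sup {enat n | n. chain_of_length S n}"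

definition Sigma'_tensor :: "('a::complete_lattice \<times> 'b::complete_lattice) set set" where
  "Sigma'_tensor = {R. R \<subset> Atoms \<times> Atoms \<and>
     (\<forall>p1\<in>Atoms. \<forall>p2\<in>Atoms.
        {q1. (q1, p2) \<in> R} \<in> Cl (Coatoms \<union> {top}) \<and>
        {q2. (p1, q2) \<in> R} \<in> Cl (Coatoms \<union> {top}))}"

text \<open>intersections are taken inside \<Sigma>1 \<times> \<Sigma>2 (so the empty intersection is \<Sigma>1 \<times> \<Sigma>2)\<close>
definition tensor :: "('a::complete_lattice \<times> 'b::complete_lattice) set set" where
  "tensor = {(Atoms \<times> Atoms) \<inter> \<Inter>\<omega> | \<omega>. \<omega> \<subseteq> Sigma'_tensor \<union> {Atoms \<times> Atoms}}"

definition tensor_coatom :: "('a::complete_lattice \<times> 'b::complete_lattice) set \<Rightarrow> bool" where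
  "tensor_coatom X \<longleftrightarrow> X \<in> tensor \<and> X \<noteq> Atoms \<times> Atoms \<and>
     (\<forall>Y\<in>tensor. X \<subseteq> Y \<longrightarrow> Y = X \<or> Y = Atoms \<times> Atoms)"

end

theory Submission
  imports Defs
begin

lemma atomistic_le:
  fixes a b :: "'a::complete_lattice"
  assumes "atomistic TYPE('a)" and "\<And>p. atom p \<Longrightarrow> p \<le> a \<Longrightarrow> p \<le> b"
  shows "a \<le> b"
proof -
  have "a = Sup (atoms_below a)" using assms(1) unfolding atomistic_def by blast
  also have "\<dots> \<le> b" using assms(2) by (auto intro!: Sup_least simp: atoms_below_def)
  finally show ?thesis .
qed

lemma atomistic_ex:
  fixes a b :: "'a::complete_lattice"
  assumes "atomistic TYPE('a)" and "\<not> a \<le> b"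
  shows "\<exists>p. atom p \<and> p \<le> a \<and> \<not> p \<le> b"
  using atomistic_le[OF assms(1), of a b] assms(2) by blast

lemma coatom_le_eq:
  fixes c w :: "'a::complete_lattice"
  assumes "coatom c" "c \<le> w" "w < top"
  shows "w = c"
  using assms unfolding coatom_def by blast

lemma coatom_dual: "coatom (dual x) \<longleftrightarrow> atom (x::'a::complete_lattice)"
proof
  assume h: "coatom (dual x)"
  show "atom x" unfolding atom_def
  proof (intro conjI allI impI)
    show "bot < x" using h unfolding coatom_def by (metis dual_bot_eq less_dual_iff)
    fix y assume "bot < y \<and> y \<le> x"
    then have "dual x \<le> dual y \<and> dual y < top"
      by (metis dual_bot_eq less_dual_iff less_eq_dual_iff)
    then show "y = x" using h unfolding coatom_def by blast
  qed
next
  assume h: "atom x"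
  show "coatom (dual x)" unfolding coatom_def
  proof (intro conjI allI impI)
    show "dual x < top" using h unfolding atom_def by (metis dual_bot_eq less_dual_iff)
    fix y assume a: "dual x \<le> y \<and> y < top"
    have "bot < undual y \<and> undual y \<le> x" using a
      by (metis dual_bot_eq dual_undual less_dual_iff less_eq_dual_iff)
    then have "undual y = x" using h unfolding atom_def by blast
    then show "y = dual x" by (metis dual_undual)
  qed
qed

lemma atom_dual: "atom (dual x) \<longleftrightarrow> coatom (x::'a::complete_lattice)"
proof
  assume h: "atom (dual x)"
  show "coatom x" unfolding coatom_def
  proof (intro conjI allI impI)
    show "x < top" using h unfolding atom_def by (metis dual_top_eq less_dual_iff)
    fix y assume "x \<le> y \<and> y < top"
    then have "bot < dual y \<and> dual y \<le> dual x"
      by (metis dual_top_eq less_dual_iff less_eq_dual_iff)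
    then show "y = x" using h unfolding atom_def by blast
  qed
next
  assume h: "coatom x"
  show "atom (dual x)" unfolding atom_def
  proof (intro conjI allI impI)
    show "bot < dual x" using h unfolding coatom_def by (metis dual_top_eq less_dual_iff)
    fix y assume a: "bot < y \<and> y \<le> dual x"
    have "x \<le> undual y \<and> undual y < top" using a
      by (metis dual_top_eq dual_undual less_dual_iff less_eq_dual_iff)
    then have "undual y = x" using h unfolding coatom_def by blast
    then show "y = dual x" by (metis dual_undual)
  qed
qed

lemma dual_cover:
  fixes c d :: "'a::complete_lattice"
  assumes "DAC_lattice TYPE('a)" "coatom c" "coatom d" "c \<noteq> d"
  shows "inf c d < c \<and> (\<forall>e. inf c d \<le> e \<and> e \<le> c \<longrightarrow> e = c \<or> e = inf c d)"
proof -
  have cp: "covering_property TYPE('a dual)" using assms(1) unfolding DAC_lattice_def by blast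
  have "\<not> c \<le> d" using assms coatom_le_eq unfolding coatom_def by metis
  then have "\<not> dual d \<le> dual c" by simp
  moreover have "atom (dual d)" using assms(3) atom_dual by blast
  ultimately have "covers (dual c) (sup (dual c) (dual d))"
    using cp unfolding covering_property_def by blast
  then have cv: "covers (dual c) (dual (inf c d))" by (simp only: dual_inf_eq)
  show ?thesis
  proof (intro conjI allI impI)
    show "inf c d < c" using cv unfolding covers_def by (metis less_dual_iff)
    fix e assume "inf c d \<le> e \<and> e \<le> c"
    then have "dual c \<le> dual e \<and> dual e \<le> dual (inf c d)" by (metis less_eq_dual_iff)
    then have "dual e = dual c \<or> dual e = dual (inf c d)" using cv unfolding covers_def by blast
    then show "e = c \<or> e = inf c d" by (metis eq_dual_iff)
  qed
qed


lemma chain_mono: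
  assumes "chain_of_length S n" "k \<le> n"
  shows "chain_of_length S k"
proof -
  obtain c where c: "\<forall>i\<le>n. c i \<in> S" "\<forall>i<n. c i < c (Suc i)"
    using assms(1) unfolding chain_of_length_def by blast
  have "\<forall>i\<le>k. c i \<in> S" using c(1) assms(2) by simp
  moreover have "\<forall>i<k. c i < c (Suc i)" using c(2) assms(2) by simp
  ultimately show ?thesis unfolding chain_of_length_def by blast
qed

lemma col_top:
  fixes u v q :: "'a::complete_lattice"
  assumes "atomistic TYPE('a)" "u \<in> Coatoms \<union> {top}" "v \<in> Coatoms \<union> {top}"
    "atoms_below v \<subseteq> atoms_below u" "atom q" "q \<le> u" "\<not> q \<le> v"
  shows "u = top"
proof (rule ccontr)
  assume nt: "u \<noteq> top"
  then have cu: "coatom u" using assms(2) by (auto simp: Coatoms_def)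
  have vt: "v \<noteq> top" using assms(7) by auto
  then have cv: "coatom v" using assms(3) by (auto simp: Coatoms_def)
  have "v \<le> u" using atomistic_le[OF assms(1)] assms(4) by (auto simp: atoms_below_def)
  then have "u = v" using coatom_le_eq[OF cv] cu unfolding coatom_def by blast
  then show False using assms by simp
qed

lemma ex_two:
  assumes "\<forall>i<(3::nat). P i" shows "P 0 \<and> P 1 \<and> P 2"
  using assms by auto

theorem lemma8p2:
  fixes f :: "'a::complete_lattice \<Rightarrow> 'b::complete_lattice dual"
  assumes "Cal0Sym_obj TYPE('a)" and "Cal0Sym_obj TYPE('b)"
    and "DAC_lattice TYPE('a)" and "DAC_lattice TYPE('b)"
    and "Cal0Sym_arrow f"
    and "set_length (range f) = 2"
  defines "X \<equiv> (\<Union>p\<in>Atoms. {p} \<times> atoms_below (undual (f p)))"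
  shows "tensor_coatom X \<and>
    (\<exists>x1 y1 :: 'a. \<exists>x2 y2 :: 'b. \<exists>h.
       coatom x1 \<and> coatom y1 \<and> x1 \<noteq> y1 \<and>
       coatom x2 \<and> coatom y2 \<and> x2 \<noteq> y2 \<and>
       bij_betw h (coatoms_above (inf x1 y1)) (coatoms_above (inf x2 y2)) \<and>
       X = (\<Union>z\<in>coatoms_above (inf x1 y1). atoms_below z \<times> atoms_below (h z)))"
proof -
  define g where "g = (\<lambda>a. undual (f a))"
  have atA: "atomistic TYPE('a)" using assms(3) unfolding DAC_lattice_def by blast
  have atB: "atomistic TYPE('b)" using assms(4) unfolding DAC_lattice_def by blast
  have fsup: "\<And>S. f (Sup S) = Sup (f ` S)" using assms(5) unfolding Cal0Sym_arrow_def by blast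
  have fg: "\<And>x. f x = dual (g x)" unfolding g_def by simp
  have gSup: "\<And>S. g (Sup S) = Inf (g ` S)" unfolding g_def using fsup by (simp add: image_image)
  have gsup: "\<And>a b. g (sup a b) = inf (g a) (g b)" using gSup[of "{_, _}"] by simp
  have anti: "\<And>a b. a \<le> b \<Longrightarrow> g b \<le> g a" by (metis gsup inf.cobounded1 sup.absorb2)
  have gatom: "\<And>p. atom p \<Longrightarrow> coatom (g p) \<or> g p = top"
  proof -
    fix p :: 'a assume "atom p"
    then have "atom (f p) \<or> f p = bot" using assms(5) unfolding Cal0Sym_arrow_def by blast
    then show "coatom (g p) \<or> g p = top" unfolding fg by (metis atom_dual dual_top_eq eq_dual_iff)
  qed
  define Res where "Res = (\<lambda>b. Sup {a. b \<le> g a})"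
  have galois: "\<And>a b. a \<le> Res b \<longleftrightarrow> b \<le> g a"
  proof -
    fix a b
    have gR: "b \<le> g (Res b)" unfolding Res_def gSup by (auto intro!: Inf_greatest)
    show "a \<le> Res b \<longleftrightarrow> b \<le> g a"
    proof
      assume "a \<le> Res b" then show "b \<le> g a" using gR anti order_trans by blast
    next
      assume "b \<le> g a" then show "a \<le> Res b" unfolding Res_def by (auto intro: Sup_upper)
    qed
  qed
  have resid_eq: "\<And>q. resid f (dual q) = Res q"
    unfolding resid_def Res_def fg by simp
  have Resq: "\<And>q. atom q \<Longrightarrow> coatom (Res q) \<or> Res q = top"
  proof -
    fix q :: 'b assume "atom q"
    then have "coatom (dual q)" by (simp add: coatom_dual)
    then show "coatom (Res q) \<or> Res q = top" using assms(5) resid_eq unfolding Cal0Sym_arrow_def by metis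
  qed
  define m where "m = g top"
  have mle: "\<And>a. m \<le> g a" unfolding m_def by (simp add: anti)
  have atoms_top: "\<And>x::'a. atoms_below (top::'a) = Atoms" by (simp add: atoms_below_def Atoms_def)
  have gm: "m = Inf (g ` Atoms)"
  proof -
    have "(top::'a) = Sup (atoms_below top)" using atA unfolding atomistic_def by blast
    then show ?thesis unfolding m_def by (metis atoms_top gSup)
  qed
  have no3: "\<not> chain_of_length (range f) 3"
  proof
    assume "chain_of_length (range f) 3"
    then have "enat 3 \<le> set_length (range f)" unfolding set_length_def by (auto intro!: Sup_upper)
    then show False using assms(6) by (simp add: numeral_eq_enat)
  qed
  have has2: "chain_of_length (range f) 2"
  proof (rule ccontr)
    assume n2: "\<not> chain_of_length (range f) 2"
    have "\<And>n. chain_of_length (range f) n \<Longrightarrow> n \<le> 1"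
      using chain_mono n2 by (metis not_less_eq_eq one_add_one plus_1_eq_Suc)
    then have "set_length (range f) \<le> 1" unfolding set_length_def
      by (auto intro!: Sup_least simp: one_enat_def)
    then show False using assms(6) by (simp add: numeral_eq_enat one_enat_def)
  qed
  have L1: "\<And>a. g a = top \<or> g a = m \<or> coatom (g a)"
  proof (rule ccontr)
    fix a assume neg: "\<not> (g a = top \<or> g a = m \<or> coatom (g a))"
    have "\<exists>p. atom p \<and> p \<le> a \<and> g p \<noteq> top"
    proof (rule ccontr)
      assume "\<not> ?thesis"
      then have "\<forall>x\<in>g ` atoms_below a. x = top" by (auto simp: atoms_below_def)
      moreover have "a = Sup (atoms_below a)" using atA unfolding atomistic_def by blast
      ultimately have "g a = top" by (metis gSup Inf_top_conv(1))
      then show False using neg by simp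
    qed
    then obtain p where p: "atom p" "p \<le> a" "g p \<noteq> top" by blast
    have cp: "coatom (g p)" using gatom p by blast
    have le: "g a \<le> g p" using anti p by blast
    have ne: "g a \<noteq> g p" using cp neg by metis
    define c where "c = (\<lambda>i::nat. f (if i = 0 then bot else if i = 1 then p else if i = 2 then a else top))"
    have "chain_of_length (range f) 3" unfolding chain_of_length_def
    proof (intro exI[of _ c] conjI allI impI)
      fix i :: nat show "c i \<in> range f" unfolding c_def by simp
    next
      fix i :: nat assume "i < 3"
      then have "i = 0 \<or> i = 1 \<or> i = 2" by auto
      moreover have "g p < top" using cp unfolding coatom_def by blast
      moreover have "g a < g p" using le ne by simp
      moreover have "m < g a" using mle neg order.not_eq_order_implies_strict by metis
      moreover have "g bot = top" using gSup[of "{}"] by simp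
      ultimately show "c i < c (Suc i)" unfolding c_def fg m_def by auto
    qed
    then show False using no3 by simp
  qed
  obtain cc where cc: "\<forall>i\<le>2. cc i \<in> range f" "\<forall>i<2. cc i < cc (Suc i)"
    using has2 unfolding chain_of_length_def by blast
  obtain a0 a1 a2 where a: "cc 0 = f a0" "cc 1 = f a1" "cc 2 = f a2" using cc(1)
    by (metis le_numeral_extra(3) nat_le_linear one_le_numeral rangeE zero_le)
  have "cc 0 < cc 1" "cc 1 < cc 2" using cc(2) by (auto simp: numeral_2_eq_2)
  then have g12: "g a1 < g a0" "g a2 < g a1" unfolding a fg by auto
  have "g a2 \<noteq> top" using g12 top.not_eq_extremum by fastforce
  moreover have "\<not> coatom (g a2)" using g12 coatom_le_eq
    by (metis less_le_not_le top.not_eq_extremum top_greatest)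
  ultimately have "g a2 = m" using L1 by blast
  then have m_ntop: "m \<noteq> top" and m_nco: "\<not> coatom m" using g12 coatom_le_eq
    by (metis less_le_not_le top.not_eq_extremum top_greatest)+
  define C where "C = {c. coatom c \<and> c \<in> range g}"
  obtain p1 where p1: "atom p1" "g p1 \<noteq> top"
    using gm m_ntop by (auto simp: Atoms_def Inf_top_conv)
  define x2 where "x2 = g p1"
  have x2C: "x2 \<in> C" using gatom p1 unfolding C_def x2_def by auto
  obtain p2 where p2: "atom p2" "g p2 \<noteq> top" "g p2 \<noteq> x2"
  proof -
    have "\<exists>p. atom p \<and> g p \<noteq> top \<and> g p \<noteq> x2"
    proof (rule ccontr)
      assume "\<not> ?thesis"
      then have "x2 \<le> m" unfolding gm by (auto intro!: Inf_greatest simp: Atoms_def)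
      then have "m = x2" using mle x2_def by (simp add: order_antisym)
      then show False using x2C m_nco C_def by simp
    qed
    then show ?thesis using that by blast
  qed
  define y2 where "y2 = g p2"
  have y2C: "y2 \<in> C" using gatom p2 unfolding C_def y2_def by auto
  have xy2: "x2 \<noteq> y2" using p2 y2_def by simp
  have meetm: "\<And>c d. c \<in> C \<Longrightarrow> d \<in> C \<Longrightarrow> c \<noteq> d \<Longrightarrow> inf c d = m"
  proof -
    fix c d assume c: "c \<in> C" and d: "d \<in> C" and cd: "c \<noteq> d"
    obtain a b where ab: "c = g a" "d = g b" using c d unfolding C_def by auto
    have e: "inf c d = g (sup a b)" using ab gsup by simp
    have cc: "coatom c" "coatom d" using c d unfolding C_def by auto
    have ne: "inf c d \<noteq> c"
      using cc cd coatom_le_eq unfolding coatom_def by (metis inf.absorb_iff1)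
    have "inf c d \<noteq> top" using cc unfolding coatom_def by (metis inf.cobounded1 top.extremum_unique order.strict_iff_not)
    moreover have "\<not> coatom (inf c d)" using ne cc unfolding coatom_def by (metis inf.cobounded1)
    ultimately show "inf c d = m" using L1 e by metis
  qed
  have supco: "\<And>c d::'b. coatom c \<Longrightarrow> coatom d \<Longrightarrow> c \<noteq> d \<Longrightarrow> sup c d = top"
  proof (rule ccontr)
    fix c d :: 'b assume h: "coatom c" "coatom d" "c \<noteq> d" "sup c d \<noteq> top"
    then have "sup c d = c" using coatom_le_eq[of c "sup c d"] by (simp add: top.not_eq_extremum)
    then have "d \<le> c" by (metis sup.cobounded2)
    then show False using h coatom_le_eq[of d c] unfolding coatom_def by metis
  qed
  define n0 where "n0 = Res top"
  have gn0: "\<And>a. a \<le> n0 \<longleftrightarrow> g a = top" unfolding n0_def galois by (simp add: top_le top_unique)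
  have gn0top: "g n0 = top" using gn0[of n0] by simp
  have n0_le: "\<And>c. n0 \<le> Res c" using gn0top galois by auto
  have ResC: "\<And>c. c \<in> C \<Longrightarrow> g (Res c) = c"
  proof -
    fix c assume "c \<in> C"
    then obtain a where a: "c = g a" unfolding C_def by auto
    have "g (Res c) = Inf (g ` {a. c \<le> g a})" unfolding Res_def gSup ..
    moreover have "Inf (g ` {a. c \<le> g a}) \<le> c" using a by (auto intro: Inf_lower)
    moreover have "c \<le> Inf (g ` {a. c \<le> g a})" by (auto intro: Inf_greatest)
    ultimately show "g (Res c) = c" by simp
  qed
  have Res_co: "\<And>c. c \<in> C \<Longrightarrow> coatom (Res c)"
  proof -
    fix c assume cC: "c \<in> C"
    have cco: "coatom c" using cC C_def by simp
    obtain a0 where a0: "c = g a0" using cC unfolding C_def by auto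
    have "m \<le> c" using mle a0 by simp
    then have "\<not> c \<le> m" using cco m_nco by (auto dest: order_antisym)
    then obtain q where q: "atom q" "q \<le> c" "\<not> q \<le> m" using atomistic_ex[OF atB] by blast
    have iff: "\<And>a. q \<le> g a \<longleftrightarrow> c \<le> g a"
    proof
      fix a assume qa: "q \<le> g a"
      show "c \<le> g a"
      proof -
        consider "g a = top" | "g a = m" | "coatom (g a)" using L1 by blast
        then show ?thesis
        proof cases
          case 1 then show ?thesis by simp
        next
          case 2 then show ?thesis using qa q by simp
        next
          case 3
          show ?thesis
          proof (rule ccontr)
            assume "\<not> c \<le> g a"
            then have "c \<noteq> g a" by auto
            moreover have "g a \<in> C" using 3 C_def by auto
            ultimately have "inf c (g a) = m" using meetm cC by blast
            then have "q \<le> m" using q(2) qa by (metis le_inf_iff)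
            then show False using q(3) by simp
          qed
        qed
      qed
    next
      fix a assume "c \<le> g a" then show "q \<le> g a" using q(2) by (rule order_trans[rotated])
    qed
    have "q \<le> g (Res q)" using galois[of "Res q" q] by simp
    then have "c \<le> g (Res q)" using iff by blast
    then have e1: "Res q \<le> Res c" using galois by blast
    have "c \<le> g (Res c)" using galois[of "Res c" c] by simp
    then have "q \<le> g (Res c)" using iff by blast
    then have e2: "Res c \<le> Res q" using galois by blast
    have eq: "Res q = Res c" using e1 e2 by (rule order_antisym)
    have "Res q \<noteq> top"
    proof
      assume "Res q = top"
      then have "q \<le> g top" using galois[of top q] by simp
      then show False using q(3) m_def by simp
    qed
    then have "coatom (Res q)" using Resq[OF q(1)] by blast
    then show "coatom (Res c)" using eq by simp
  qed
  have Res_inf: "\<And>c d. c \<in> C \<Longrightarrow> d \<in> C \<Longrightarrow> c \<noteq> d \<Longrightarrow> inf (Res c) (Res d) = n0"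
  proof -
    fix c d assume c: "c \<in> C" and d: "d \<in> C" and cd: "c \<noteq> d"
    have st: "sup c d = top" using supco c d cd C_def by auto
    have "c \<le> g (inf (Res c) (Res d))" using galois[of "inf (Res c) (Res d)" c] by simp
    moreover have "d \<le> g (inf (Res c) (Res d))" using galois[of "inf (Res c) (Res d)" d] by simp
    ultimately
    have "top \<le> g (inf (Res c) (Res d))" using st by (metis sup_least)
    then have "inf (Res c) (Res d) \<le> n0" using gn0 by (simp add: top_unique)
    moreover have "n0 \<le> Res c" "n0 \<le> Res d" using gn0top galois by auto
    ultimately show "inf (Res c) (Res d) = n0" by (simp add: order_antisym)
  qed
  have other: "\<And>c. \<exists>d\<in>C. d \<noteq> c" using x2C y2C xy2 by metis
  have cover_all: "\<And>q. atom q \<Longrightarrow> \<exists>c\<in>C. q \<le> c"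
  proof -
    fix q :: 'b assume q: "atom q"
    show "\<exists>c\<in>C. q \<le> c"
    proof (cases "q \<le> m")
      case True then show ?thesis using x2C mle x2_def order_trans by blast
    next
      case False
      define r where "r = Res q"
      have rt: "r \<noteq> top" using galois[of top q] False m_def r_def by auto
      then have rc: "coatom r" using Resq q r_def by blast
      have qr: "q \<le> g r" using galois[of r q] r_def by simp
      have "g r \<noteq> top"
      proof
        assume "g r = top"
        then have "r \<le> n0" using gn0 by simp
        then have "\<And>c. r \<le> Res c" using n0_le order_trans by blast
        have "\<And>c. c \<in> C \<Longrightarrow> Res c = r"
        proof -
          fix c assume cC: "c \<in> C"
          have "Res c < top" using Res_co[OF cC] unfolding coatom_def by blast
          then show "Res c = r" using coatom_le_eq[OF rc] \<open>\<And>c. r \<le> Res c\<close> by blast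
        qed
        then have "Res x2 = Res y2" using x2C y2C by simp
        then have "x2 = y2" using ResC x2C y2C by metis
        then show False using xy2 by simp
      qed
      moreover have "g r \<noteq> m" using qr False by auto
      ultimately have "g r \<in> C" using L1 C_def by auto
      then show ?thesis using qr by blast
    qed
  qed
  have coA_m: "coatoms_above m = C"
  proof
    show "C \<subseteq> coatoms_above m" using mle unfolding C_def coatoms_above_def by auto
  next
    show "coatoms_above m \<subseteq> C"
    proof
      fix w assume "w \<in> coatoms_above m"
      then have w: "coatom w" "m \<le> w" unfolding coatoms_above_def by auto
      have "\<not> w \<le> m" using w m_nco by (metis order_antisym)
      then obtain q where q: "atom q" "q \<le> w" "\<not> q \<le> m" using atomistic_ex[OF atB] by blast
      obtain c where c: "c \<in> C" "q \<le> c" using cover_all q by blast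
      obtain d where d: "d \<in> C" "d \<noteq> c" using other by blast
      have cv: "inf c d < c \<and> (\<forall>e. inf c d \<le> e \<and> e \<le> c \<longrightarrow> e = c \<or> e = inf c d)"
        using dual_cover[OF assms(4)] c d C_def by auto
      have icd: "inf c d = m" using meetm c d by auto
      have "sup m q \<le> c" using c cv icd by auto
      moreover have "sup m q \<noteq> m" using q by (metis sup.absorb_iff1)
      moreover have "inf c d \<le> sup m q" using icd by simp
      ultimately have "sup m q = c \<or> sup m q = inf c d" using cv by blast
      then have "sup m q = c" using \<open>sup m q \<noteq> m\<close> icd by simp
      then have "c \<le> w" using w q by (metis sup_least)
      moreover have "coatom c" using c C_def by simp
      moreover have "w < top" using w unfolding coatom_def by blast
      ultimately have "w = c" using coatom_le_eq by blast
      then show "w \<in> C" using c by simp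
    qed
  qed
  have coA_n0: "coatoms_above n0 = Res ` C"
  proof
    show "Res ` C \<subseteq> coatoms_above n0" using n0_le Res_co unfolding coatoms_above_def by auto
  next
    show "coatoms_above n0 \<subseteq> Res ` C"
    proof
      fix w assume "w \<in> coatoms_above n0"
      then have w: "coatom w" "n0 \<le> w" unfolding coatoms_above_def by auto
      have "inf (Res x2) (Res y2) = n0" using Res_inf x2C y2C xy2 by blast
      moreover have "Res x2 \<noteq> Res y2" using ResC x2C y2C xy2 by metis
      ultimately have "n0 < Res x2" using dual_cover[OF assms(3)] Res_co x2C y2C by metis
      then have "\<not> coatom n0" using Res_co x2C unfolding coatom_def
        by (metis order.strict_iff_not)
      then have "\<not> w \<le> n0" using w by (metis order_antisym)
      then obtain p where p: "atom p" "p \<le> w" "\<not> p \<le> n0" using atomistic_ex[OF atA] by blast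
      define c where "c = g p"
      have cC: "c \<in> C" using gatom p gn0 c_def C_def by auto
      have pc: "p \<le> Res c" using galois c_def by simp
      obtain d where d: "d \<in> C" "d \<noteq> c" using other by blast
      have rne: "Res c \<noteq> Res d" using ResC cC d by metis
      have cv: "inf (Res c) (Res d) < Res c \<and> (\<forall>e. inf (Res c) (Res d) \<le> e \<and> e \<le> Res c \<longrightarrow> e = Res c \<or> e = inf (Res c) (Res d))"
        using dual_cover[OF assms(3)] Res_co cC d rne by auto
      have icd: "inf (Res c) (Res d) = n0" using Res_inf cC d by auto
      have "sup n0 p \<le> Res c" using pc n0_le cC by auto
      moreover have "sup n0 p \<noteq> n0" using p by (metis sup.absorb_iff1)
      moreover have "inf (Res c) (Res d) \<le> sup n0 p" using icd by simp
      ultimately have "sup n0 p = Res c \<or> sup n0 p = inf (Res c) (Res d)" using cv by blast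
      then have "sup n0 p = Res c" using \<open>sup n0 p \<noteq> n0\<close> icd by simp
      then have "Res c \<le> w" using w p by (metis sup_least)
      moreover have "w < top" using w unfolding coatom_def by blast
      ultimately have "w = Res c" using coatom_le_eq Res_co[OF cC] by blast
      then show "w \<in> Res ` C" using cC by simp
    qed
  qed
  define x1 where "x1 = Res x2"
  define y1 where "y1 = Res y2"
  have i1: "inf x1 y1 = n0" unfolding x1_def y1_def using Res_inf x2C y2C xy2 by blast
  have i2: "inf x2 y2 = m" using meetm x2C y2C xy2 by blast
  have memX: "\<And>p q. (p, q) \<in> X \<longleftrightarrow> atom p \<and> atom q \<and> q \<le> g p"
    unfolding X_def g_def by (auto simp: Atoms_def atoms_below_def)
  have part2: "\<exists>x1 y1 :: 'a. \<exists>x2 y2 :: 'b. \<exists>h.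
       coatom x1 \<and> coatom y1 \<and> x1 \<noteq> y1 \<and>
       coatom x2 \<and> coatom y2 \<and> x2 \<noteq> y2 \<and>
       bij_betw h (coatoms_above (inf x1 y1)) (coatoms_above (inf x2 y2)) \<and>
       X = (\<Union>z\<in>coatoms_above (inf x1 y1). atoms_below z \<times> atoms_below (h z))"
  proof (intro exI conjI)
    show "coatom x1" "coatom y1" using Res_co x2C y2C x1_def y1_def by auto
    show "x1 \<noteq> y1" using ResC x2C y2C xy2 x1_def y1_def by metis
    show "coatom x2" "coatom y2" using x2C y2C C_def by auto
    show "x2 \<noteq> y2" by (rule xy2)
    show "bij_betw g (coatoms_above (inf x1 y1)) (coatoms_above (inf x2 y2))"
      unfolding i1 i2 coA_m coA_n0 bij_betw_def
    proof
      show "inj_on g (Res ` C)" using ResC by (auto intro!: inj_onI)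
      show "g ` Res ` C = C" using ResC by (simp add: image_image)
    qed
    show "X = (\<Union>z\<in>coatoms_above (inf x1 y1). atoms_below z \<times> atoms_below (g z))"
      unfolding i1 coA_n0
    proof (intro set_eqI iffI)
      fix pq assume "pq \<in> X"
      then obtain p q where pq: "pq = (p, q)" "atom p" "atom q" "q \<le> g p" using memX by (cases pq) auto
      show "pq \<in> (\<Union>z\<in>Res ` C. atoms_below z \<times> atoms_below (g z))"
      proof (cases "g p = top")
        case True
        obtain c where c: "c \<in> C" "q \<le> c" using cover_all pq by blast
        have "p \<le> Res c" using galois True by simp
        then show ?thesis using c pq ResC by (auto simp: atoms_below_def)
      next
        case False
        then have c: "g p \<in> C" using gatom pq C_def by auto
        have "p \<le> Res (g p)" using galois by simp
        then show ?thesis using c pq ResC[OF c] by (auto simp: atoms_below_def intro!: bexI[of _ "g p"])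
      qed
    next
      fix pq assume "pq \<in> (\<Union>z\<in>Res ` C. atoms_below z \<times> atoms_below (g z))"
      then obtain c p q where pq: "pq = (p, q)" "c \<in> C" "atom p" "p \<le> Res c" "atom q" "q \<le> c"
        using ResC by (auto simp: atoms_below_def)
      have "c \<le> g p" using pq galois by simp
      then show "pq \<in> X" using memX pq order_trans by blast
    qed
  qed
  have Resq': "\<And>q. atom q \<Longrightarrow> Res q \<in> Coatoms \<union> {top}"
    using Resq by (auto simp: Coatoms_def)
  have gatom': "\<And>p. atom p \<Longrightarrow> g p \<in> Coatoms \<union> {top}"
    using gatom by (auto simp: Coatoms_def)
  have colX: "\<And>p. {q2. (p, q2) \<in> X} = (if atom p then atoms_below (g p) else {})"
    using memX by (auto simp: atoms_below_def)
  have rowX: "\<And>q. atom q \<Longrightarrow> {q1. (q1, q) \<in> X} = atoms_below (Res q)"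
    using memX galois by (auto simp: atoms_below_def)
  have AA: "Atoms \<times> Atoms = {(p, q). atom p \<and> atom q}" by (auto simp: Atoms_def)
  have XA: "X \<subseteq> Atoms \<times> Atoms" using memX AA by auto
  obtain q1 where q1: "atom q1" "\<not> q1 \<le> g p1"
  proof -
    have "\<not> top \<le> g p1" using p1(2) top_unique by blast
    then show ?thesis using atomistic_ex[OF atB, of top "g p1"] that by blast
  qed
  have "(p1, q1) \<notin> X" using memX q1 by simp
  moreover have "(p1, q1) \<in> Atoms \<times> Atoms" using p1 q1 by (simp add: Atoms_def)
  ultimately have XneA: "X \<noteq> Atoms \<times> Atoms" by blast
  have XS: "X \<in> Sigma'_tensor"
    unfolding Sigma'_tensor_def Cl_def
  proof (intro CollectI conjI ballI)
    show "X \<subset> Atoms \<times> Atoms" using XA XneA by blast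
  next
    fix pa :: 'a and qb :: 'b assume pa: "pa \<in> Atoms" and qb: "qb \<in> Atoms"
    show "{q1. (q1, qb) \<in> X} \<in> atoms_below ` (Coatoms \<union> {top})"
    proof -
      have aq: "atom qb" using qb by (simp add: Atoms_def)
      show ?thesis unfolding rowX[OF aq] using Resq'[OF aq] by (rule imageI)
    qed
    show "{q2. (pa, q2) \<in> X} \<in> atoms_below ` (Coatoms \<union> {top})"
    proof -
      have ap: "atom pa" using pa by (simp add: Atoms_def)
      have "atoms_below (g pa) \<in> atoms_below ` (Coatoms \<union> {top})" using gatom'[OF ap] by (rule imageI)
      then show ?thesis unfolding colX using ap by simp
    qed
  qed
  have maxR: "\<And>R. R \<in> Sigma'_tensor \<Longrightarrow> X \<subseteq> R \<Longrightarrow> R = X"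
  proof (rule ccontr)
    fix R :: "('a \<times> 'b) set" assume RS: "R \<in> Sigma'_tensor" and XR: "X \<subseteq> R" and RX: "R \<noteq> X"
    have Rsub: "R \<subset> Atoms \<times> Atoms" using RS unfolding Sigma'_tensor_def by blast
    have Rcol: "\<And>p q. atom p \<Longrightarrow> atom q \<Longrightarrow> \<exists>u \<in> Coatoms \<union> {top}. {q2. (p, q2) \<in> R} = atoms_below u"
      using RS unfolding Sigma'_tensor_def Cl_def Atoms_def by blast
    have Rrow: "\<And>p q. atom p \<Longrightarrow> atom q \<Longrightarrow> \<exists>u \<in> Coatoms \<union> {top}. {q1. (q1, q) \<in> R} = atoms_below u"
      using RS unfolding Sigma'_tensor_def Cl_def Atoms_def by blast
    have fullcol: "\<And>p q q'. (p, q) \<in> R \<Longrightarrow> (p, q) \<notin> X \<Longrightarrow> atom q' \<Longrightarrow> (p, q') \<in> R"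
    proof -
      fix p :: 'a and q q' :: 'b assume pq: "(p, q) \<in> R" "(p, q) \<notin> X" and q': "atom q'"
      have ap: "atom p" and aq: "atom q" using pq Rsub AA by auto
      obtain u where u: "u \<in> Coatoms \<union> {top}" "{q2. (p, q2) \<in> R} = atoms_below u"
        using Rcol ap aq by blast
      have "atoms_below (g p) = {q2. (p, q2) \<in> X}" using colX[of p] ap by simp
      then have sub: "atoms_below (g p) \<subseteq> atoms_below u" using XR u(2) by blast
      have qu: "q \<le> u" using u(2) pq by (auto simp: atoms_below_def)
      have "\<not> q \<le> g p" using memX pq ap aq by simp
      then have "u = top" using col_top[OF atB u(1) gatom'[OF ap] sub aq qu] by simp
      then have "q' \<in> {q2. (p, q2) \<in> R}" using u(2) q' by (simp add: atoms_below_def)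
      then show "(p, q') \<in> R" by simp
    qed
    have fullrow: "\<And>p q p'. (p, q) \<in> R \<Longrightarrow> (p, q) \<notin> X \<Longrightarrow> atom p' \<Longrightarrow> (p', q) \<in> R"
    proof -
      fix p p' :: 'a and q :: 'b assume pq: "(p, q) \<in> R" "(p, q) \<notin> X" and p': "atom p'"
      have ap: "atom p" and aq: "atom q" using pq Rsub AA by auto
      obtain u where u: "u \<in> Coatoms \<union> {top}" "{q1. (q1, q) \<in> R} = atoms_below u"
        using Rrow ap aq by blast
      have "atoms_below (Res q) = {q1. (q1, q) \<in> X}" using rowX[OF aq] by simp
      then have sub: "atoms_below (Res q) \<subseteq> atoms_below u" using XR u(2) by blast
      have pu: "p \<le> u" using u(2) pq by (auto simp: atoms_below_def)
      have "\<not> p \<le> Res q" using memX pq ap aq galois by simp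
      then have "u = top" using col_top[OF atA u(1) Resq'[OF aq] sub ap pu] by simp
      then have "p' \<in> {q1. (q1, q) \<in> R}" using u(2) p' by (simp add: atoms_below_def)
      then show "(p', q) \<in> R" by simp
    qed
    obtain pq0 where "pq0 \<in> R" "pq0 \<notin> X" using XR RX by blast
    then obtain p q where pq: "(p, q) \<in> R" "(p, q) \<notin> X" by (cases pq0) auto
    have ap: "atom p" and aq: "atom q" using pq Rsub AA by auto
    have nq: "\<not> q \<le> g p" using memX pq ap aq by simp
    have all: "Atoms \<times> Atoms \<subseteq> R"
    proof
      fix x :: "'a \<times> 'b" assume "x \<in> Atoms \<times> Atoms"
      then obtain p' q' where x: "x = (p', q')" "atom p'" "atom q'" using AA by blast
      show "x \<in> R"
      proof (cases "g p' = top")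
        case True
        then have "(p', q') \<in> X" using memX x by simp
        then show ?thesis using XR x by blast
      next
        case False
        then have cp': "coatom (g p')" using gatom x by blast
        have r1: "(p', q) \<in> R" using fullrow[OF pq x(2)] .
        show ?thesis
        proof (cases "q \<le> g p'")
          case False
          then have "(p', q) \<notin> X" using memX by simp
          then show ?thesis using fullcol[OF r1 _ x(3)] x by simp
        next
          case True
          have gpt: "g p \<noteq> top" using nq by auto
          then have cp: "coatom (g p)" using gatom ap by blast
          have ne: "g p' \<noteq> g p" using True nq by auto
          have "atoms_below (g p') \<union> atoms_below (g p) \<noteq> Atoms"
            using assms(2) cp cp' unfolding Cal0Sym_obj_def by blast
          then obtain q'' where q'': "atom q''" "\<not> q'' \<le> g p'" "\<not> q'' \<le> g p"
            by (auto simp: atoms_below_def Atoms_def)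
          have r2: "(p, q'') \<in> R" using fullcol[OF pq q''(1)] .
          have "(p, q'') \<notin> X" using memX q'' by simp
          then have r3: "(p', q'') \<in> R" using fullrow[OF r2 _ x(2)] by simp
          have "(p', q'') \<notin> X" using memX q'' by simp
          then show ?thesis using fullcol[OF r3 _ x(3)] x by simp
        qed
      qed
    qed
    then show False using Rsub by blast
  qed
  have Xt: "X \<in> tensor" unfolding tensor_def
    using XS XA by (intro CollectI exI[of _ "{X}"]) auto
  have "tensor_coatom X" unfolding tensor_coatom_def
  proof (intro conjI ballI impI)
    show "X \<in> tensor" by (rule Xt)
    show "X \<noteq> Atoms \<times> Atoms" by (rule XneA)
  next
    fix Y assume Yt: "Y \<in> tensor" and XY: "X \<subseteq> Y"
    obtain \<omega> where om: "Y = (Atoms \<times> Atoms) \<inter> \<Inter>\<omega>" "\<omega> \<subseteq> Sigma'_tensor \<union> {Atoms \<times> Atoms}"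
      using Yt unfolding tensor_def by blast
    have "\<And>R. R \<in> \<omega> \<Longrightarrow> R = X \<or> R = Atoms \<times> Atoms"
    proof -
      fix R assume R: "R \<in> \<omega>"
      have "X \<subseteq> R" using XY om R by blast
      then show "R = X \<or> R = Atoms \<times> Atoms" using maxR om R by blast
    qed
    then show "Y = X \<or> Y = Atoms \<times> Atoms"
    proof (cases "X \<in> \<omega>")
      case True
      then have "Y \<subseteq> X" using om by blast
      then show ?thesis using XY by blast
    next
      case False
      then have "\<Inter>\<omega> \<supseteq> Atoms \<times> Atoms" using \<open>\<And>R. R \<in> \<omega> \<Longrightarrow> R = X \<or> R = Atoms \<times> Atoms\<close> by blast
      then show ?thesis using om by blast
    qed
  qed
  then show ?thesis using part2 by blast
qed

end
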